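(* Let $(X,Y)$ be a random vector with joint cumulative distribution function $H$, where $X$ and $Y$ take values in the non-negative integers, with zero-inflated marginal cdfs $F(s)=(1-\pi_F)+\pi_F\bar F(s)$ and $G(t)=(1-\pi_G)+\pi_G\bar G(t)$ for $s,t\ge 0$ (and $F(s)=G(t)=0$ for negative arguments), where $\bar F,\bar G$ are discrete distribution functions and $\pi_F,\pi_G\in[0,1]$. Let $(\tilde X_1,\tilde Y_1)$ and $(\tilde X_2,\tilde Y_2)$ be two independent copies of $(X,Y)$, and define Kendall's $\tau$ of $(X,Y)$ as $$\tau_A=\mathbb{P}[(\tilde X_1-\tilde X_2)(\tilde Y_1-\tilde Y_2)>0]-\mathbb{P}[(\tilde X_1-\tilde X_2)(\tilde Y_1-\tilde Y_2)<0].$$ Let $p_{00}=\mathbb{P}[X=0,Y=0]$, $p_{01}=\mathbb{P}[X=0,Y>0]$, $p_{10}=\mathbb{P}[X>0,Y=0]$, $p_{11}=\mathbb{P}[X>0,Y>0]$. Let $X_{10}$ and $X_{11}$ be independent random variables, with $X_{10}$ distributed as $X$ conditionally on $\{X>0,Y=0\}$ and $X_{11}$ distributed as $X$ conditionally on $\{X>0,Y>0\}$; let $Y_{01}$ and $Y_{11}$ be independent random variables, with $Y_{01}$ distributed as $Y$ conditionally on $\{X=0,Y>0\}$ and $Y_{11}$ distributed as $Y$ conditionally on $\{X>0,Y>0\}$. Set $p_1^{\ast}=\mathbb{P}[X_{10}>X_{11}]$, $p_2^{\ast}=\mathbb{P}[Y_{01}>Y_{11}]$, $p_1^{\dagger}=\mathbb{P}[X_{10}=X_{11}]$,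 $p_2^{\dagger}=\mathbb{P}[Y_{01}=Y_{11}]$, and let $\tau_{11}$ be Kendall's $\tau$ (probability of concordance minus probability of discordance of two independent copies) of the conditional distribution of $(X,Y)$ given $\{X>0,Y>0\}$. Then $$\tau_A=p_{11}^2\tau_{11}+2(p_{00}p_{11}-p_{01}p_{10})+2p_{11}\big[p_{10}(1-2p_1^{\ast}-p_1^{\dagger})+p_{01}(1-2p_2^{\ast}-p_2^{\dagger})\big].$$
   Context: Conditional quantities (such as $p_1^\ast,p_1^\dagger,\tau_{11}$) are only defined when the conditioning event has positive probability; when a conditioning event has probability zero, the term in which the corresponding quantity appears is multiplied by a zero probability and is interpreted as $0$. *)

theory Defs
  imports "HOL-Probability.Probability"
begin

definition kendall_tau :: "(nat \<times> nat) pmf \<Rightarrow> real" where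
  "kendall_tau q =
     measure_pmf.prob (pair_pmf q q)
       {((x1, y1), (x2, y2)). (int x1 - int x2) * (int y1 - int y2) > 0}
   - measure_pmf.prob (pair_pmf q q)
       {((x1, y1), (x2, y2)). (int x1 - int x2) * (int y1 - int y2) < 0}"

definition cdf_nat :: "nat pmf \<Rightarrow> nat \<Rightarrow> real" where
  "cdf_nat q s = measure_pmf.prob q {..s}"

end

theory Submission
  imports Defs
begin

lemma cond_prob:
  assumes "set_pmf p \<inter> A \<noteq> {}"
  shows "measure_pmf.prob (cond_pmf p A) S = measure_pmf.prob p (A \<inter> S) / measure_pmf.prob p A"
  using assms measure_uniform_measure[of "measure_pmf p" A S] emeasure_measure_pmf_not_zero[of p A]
    measure_pmf.emeasure_finite[of p A]
  by (simp add: cond_pmf.rep_eq)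

lemma pair_cond:
  fixes p q :: "'a::countable pmf"
  assumes "set_pmf p \<inter> A \<noteq> {}" "set_pmf q \<inter> B \<noteq> {}"
  shows "pair_pmf (cond_pmf p A) (cond_pmf q B) = cond_pmf (pair_pmf p q) (A \<times> B)"
proof (rule pmf_eqI)
  fix z :: "'a \<times> 'a"
  obtain a b where z: "z = (a, b)" by (cases z)
  have ne: "set_pmf (pair_pmf p q) \<inter> (A \<times> B) \<noteq> {}" using assms by auto
  show "pmf (pair_pmf (cond_pmf p A) (cond_pmf q B)) z = pmf (cond_pmf (pair_pmf p q) (A \<times> B)) z"
    using assms ne unfolding z
    by (simp add: pmf_pair pmf_cond measure_pmf_prob_product)
qed

lemma pair_cond_prob:
  fixes p q :: "'a::countable pmf"
  assumes "measure_pmf.prob p A \<noteq> 0" "measure_pmf.prob q B \<noteq> 0"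
  shows "measure_pmf.prob (pair_pmf (cond_pmf p A) (cond_pmf q B)) S
     = measure_pmf.prob (pair_pmf p q) ((A \<times> B) \<inter> S) / (measure_pmf.prob p A * measure_pmf.prob q B)"
proof -
  have a: "set_pmf p \<inter> A \<noteq> {}" "set_pmf q \<inter> B \<noteq> {}" using assms measure_pmf_zero_iff by blast+
  have ne: "set_pmf (pair_pmf p q) \<inter> (A \<times> B) \<noteq> {}" using a by auto
  show ?thesis using pair_cond[OF a] cond_prob[OF ne] by (simp add: measure_pmf_prob_product)
qed

lemma swap_prob:
  "measure_pmf.prob (pair_pmf p p) {(a, b). (b, a) \<in> S} = measure_pmf.prob (pair_pmf p p) S"
proof -
  have "measure_pmf.prob (pair_pmf p p) S = measure_pmf.prob (map_pmf (\<lambda>(x, y). (y, x)) (pair_pmf p p)) S"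
    by (subst pair_commute_pmf) simp
  also have "\<dots> = measure_pmf.prob (pair_pmf p p) ((\<lambda>(x, y). (y, x)) -` S)"
    by simp
  also have "(\<lambda>(x, y). (y, x)) -` S = {(a, b). (b, a) \<in> S}" by auto
  finally show ?thesis by simp
qed

lemma ind_int: "integrable (measure_pmf p) (indicator A :: _ \<Rightarrow> real)"
  by (simp add: integrable_indicator_iff measure_pmf.emeasure_finite less_top[symmetric])

lemma int_sum_list: "integrable (measure_pmf P) (\<lambda>z. \<Sum>T\<leftarrow>Ts. (indicator T z :: real))"
  by (induction Ts) (auto intro!: ind_int Bochner_Integration.integrable_add)

lemma mu_sum:
  fixes P :: "'a pmf" and S :: "'a set" and Ts :: "'a set list"
  assumes "\<And>z. (indicator S z :: real) = (\<Sum>T\<leftarrow>Ts. indicator T z)"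
  shows "measure_pmf.prob P S = (\<Sum>T\<leftarrow>Ts. measure_pmf.prob P T)"
proof -
  have "measure_pmf.prob P S = measure_pmf.expectation P (indicator S)" by simp
  also have "\<dots> = measure_pmf.expectation P (\<lambda>z. \<Sum>T\<leftarrow>Ts. indicator T z)"
    by (rule arg_cong[where f="measure_pmf.expectation P"]) (intro ext assms)
  also have "\<dots> = (\<Sum>T\<leftarrow>Ts. measure_pmf.prob P T)"
  proof (induction Ts)
    case Nil then show ?case by simp
  next
    case (Cons T Ts)
    have "measure_pmf.expectation P (\<lambda>z. \<Sum>T\<leftarrow>T # Ts. indicator T z)
      = measure_pmf.expectation P (\<lambda>z. indicator T z + (\<Sum>T\<leftarrow>Ts. indicator T z))" by simp
    also have "\<dots> = measure_pmf.expectation P (indicator T) + measure_pmf.expectation P (\<lambda>z. \<Sum>T\<leftarrow>Ts. (indicator T z :: real))"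
      by (rule Bochner_Integration.integral_add) (auto intro!: ind_int int_sum_list)
    finally show ?case using Cons by simp
  qed
  finally show ?thesis .
qed

theorem theorem1:
  fixes H :: "(nat \<times> nat) pmf"
    and \<pi>F \<pi>G :: real
    and Fbar Gbar :: "nat pmf"
  assumes "0 \<le> \<pi>F" "\<pi>F \<le> 1" "0 \<le> \<pi>G" "\<pi>G \<le> 1"
    and "\<And>s. cdf_nat (map_pmf fst H) s = (1 - \<pi>F) + \<pi>F * cdf_nat Fbar s"
    and "\<And>t. cdf_nat (map_pmf snd H) t = (1 - \<pi>G) + \<pi>G * cdf_nat Gbar t"
  shows
   "let A00 = {(x, y). x = 0 \<and> y = 0};
        A01 = {(x, y). x = 0 \<and> y > 0};
        A10 = {(x, y). x > 0 \<and> y = 0};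
        A11 = {(x, y). x > 0 \<and> y > 0};
        p00 = measure_pmf.prob H A00;
        p01 = measure_pmf.prob H A01;
        p10 = measure_pmf.prob H A10;
        p11 = measure_pmf.prob H A11;
        X10 = map_pmf fst (cond_pmf H A10);
        X11 = map_pmf fst (cond_pmf H A11);
        Y01 = map_pmf snd (cond_pmf H A01);
        Y11 = map_pmf snd (cond_pmf H A11);
        p1s = measure_pmf.prob (pair_pmf X10 X11) {(a, b). a > b};
        p2s = measure_pmf.prob (pair_pmf Y01 Y11) {(a, b). a > b};
        p1d = measure_pmf.prob (pair_pmf X10 X11) {(a, b). a = b};
        p2d = measure_pmf.prob (pair_pmf Y01 Y11) {(a, b). a = b};
        tau11 = kendall_tau (cond_pmf H A11)
    in kendall_tau H =
         (if p11 = 0 then 0 else p11\<^sup>2 * tau11)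
         + 2 * (p00 * p11 - p01 * p10)
         + 2 * p11 * ((if p10 = 0 \<or> p11 = 0 then 0 else p10 * (1 - 2 * p1s - p1d))
                    + (if p01 = 0 \<or> p11 = 0 then 0 else p01 * (1 - 2 * p2s - p2d)))"
proof -
  define A00 where "A00 = {(x::nat, y::nat). x = 0 \<and> y = 0}"
  define A01 where "A01 = {(x::nat, y::nat). x = 0 \<and> y > 0}"
  define A10 where "A10 = {(x::nat, y::nat). x > 0 \<and> y = 0}"
  define A11 where "A11 = {(x::nat, y::nat). x > 0 \<and> y > 0}"
  define p00 where "p00 = measure_pmf.prob H A00"
  define p01 where "p01 = measure_pmf.prob H A01"
  define p10 where "p10 = measure_pmf.prob H A10"
  define p11 where "p11 = measure_pmf.prob H A11"
  define P where "P = pair_pmf H H"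
  define Pos :: "((nat \<times> nat) \<times> (nat \<times> nat)) set"
    where "Pos = {((x1, y1), (x2, y2)). (int x1 - int x2) * (int y1 - int y2) > 0}"
  define Neg :: "((nat \<times> nat) \<times> (nat \<times> nat)) set"
    where "Neg = {((x1, y1), (x2, y2)). (int x1 - int x2) * (int y1 - int y2) < 0}"
  define U1 where "U1 = (A01 \<times> A11) \<inter> {(a, b). snd a < snd b}"
  define U2 where "U2 = (A01 \<times> A11) \<inter> {(a, b). snd a > snd b}"
  define U3 where "U3 = (A01 \<times> A11) \<inter> {(a, b). snd a = snd b}"
  define V1 where "V1 = (A10 \<times> A11) \<inter> {(a, b). fst a < fst b}"
  define V2 where "V2 = (A10 \<times> A11) \<inter> {(a, b). fst a > fst b}"
  define V3 where "V3 = (A10 \<times> A11) \<inter> {(a, b). fst a = fst b}"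
  define W1 where "W1 = (A11 \<times> A11) \<inter> Pos"
  define W2 where "W2 = (A11 \<times> A11) \<inter> Neg"
  define sw :: "((nat \<times> nat) \<times> (nat \<times> nat)) set \<Rightarrow> ((nat \<times> nat) \<times> (nat \<times> nat)) set"
    where "sw S = {(a, b). (b, a) \<in> S}" for S
  have F1: "kendall_tau H = measure_pmf.prob P Pos - measure_pmf.prob P Neg"
    unfolding kendall_tau_def P_def Pos_def Neg_def by simp
  have F2: "measure_pmf.prob P Pos = (\<Sum>T\<leftarrow>[A00 \<times> A11, A11 \<times> A00, U1, sw U1, V1, sw V1, W1]. measure_pmf.prob P T)"
  proof (rule mu_sum)
    fix z :: "(nat \<times> nat) \<times> (nat \<times> nat)"
    obtain x1 y1 x2 y2 where z: "z = ((x1, y1), (x2, y2))" by (metis prod.collapse)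
    show "indicator Pos z = (\<Sum>T\<leftarrow>[A00 \<times> A11, A11 \<times> A00, U1, sw U1, V1, sw V1, W1]. (indicator T z :: real))"
      unfolding z by (auto simp: indicator_def A00_def A01_def A10_def A11_def U1_def V1_def W1_def sw_def Pos_def
          zero_less_mult_iff)
  qed
  have F3: "measure_pmf.prob P Neg = (\<Sum>T\<leftarrow>[A01 \<times> A10, A10 \<times> A01, U2, sw U2, V2, sw V2, W2]. measure_pmf.prob P T)"
  proof (rule mu_sum)
    fix z :: "(nat \<times> nat) \<times> (nat \<times> nat)"
    obtain x1 y1 x2 y2 where z: "z = ((x1, y1), (x2, y2))" by (metis prod.collapse)
    show "indicator Neg z = (\<Sum>T\<leftarrow>[A01 \<times> A10, A10 \<times> A01, U2, sw U2, V2, sw V2, W2]. (indicator T z :: real))"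
      unfolding z by (auto simp: indicator_def A00_def A01_def A10_def A11_def U2_def V2_def W2_def sw_def Neg_def
          mult_less_0_iff)
  qed
  have sw: "measure_pmf.prob P (sw S) = measure_pmf.prob P S" for S
    unfolding sw_def P_def by (rule swap_prob)
  have prod: "measure_pmf.prob P (A \<times> B) = measure_pmf.prob H A * measure_pmf.prob H B" for A B
    unfolding P_def by (simp add: measure_pmf_prob_product)
  have mono0: "measure_pmf.prob P S = 0" if "S \<subseteq> A \<times> B" "measure_pmf.prob H A * measure_pmf.prob H B = 0" for S A B
    using measure_pmf.finite_measure_mono[OF that(1), of P] prod[of A B] that(2)
    by (simp add: measure_nonneg order_antisym)
  have U123: "measure_pmf.prob P U1 + measure_pmf.prob P U2 + measure_pmf.prob P U3 = p01 * p11"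
  proof -
    have "measure_pmf.prob P (A01 \<times> A11) = (\<Sum>T\<leftarrow>[U1, U2, U3]. measure_pmf.prob P T)"
    proof (rule mu_sum)
      fix z :: "(nat \<times> nat) \<times> (nat \<times> nat)"
      show "indicator (A01 \<times> A11) z = (\<Sum>T\<leftarrow>[U1, U2, U3]. (indicator T z :: real))"
        by (auto simp: indicator_def U1_def U2_def U3_def)
    qed
    then show ?thesis using prod[of A01 A11] by (simp add: p01_def p11_def)
  qed
  have V123: "measure_pmf.prob P V1 + measure_pmf.prob P V2 + measure_pmf.prob P V3 = p10 * p11"
  proof -
    have "measure_pmf.prob P (A10 \<times> A11) = (\<Sum>T\<leftarrow>[V1, V2, V3]. measure_pmf.prob P T)"
    proof (rule mu_sum)
      fix z :: "(nat \<times> nat) \<times> (nat \<times> nat)"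
      show "indicator (A10 \<times> A11) z = (\<Sum>T\<leftarrow>[V1, V2, V3]. (indicator T z :: real))"
        by (auto simp: indicator_def V1_def V2_def V3_def)
    qed
    then show ?thesis using prod[of A10 A11] by (simp add: p10_def p11_def)
  qed
  have Ucase: "p01 * (1 - 2 * measure_pmf.prob (pair_pmf (map_pmf snd (cond_pmf H A01)) (map_pmf snd (cond_pmf H A11))) {(a, b). a > b}
      - measure_pmf.prob (pair_pmf (map_pmf snd (cond_pmf H A01)) (map_pmf snd (cond_pmf H A11))) {(a, b). a = b}) * p11
      = measure_pmf.prob P U1 - measure_pmf.prob P U2" if "p01 \<noteq> 0" "p11 \<noteq> 0"
  proof -
    have e: "pair_pmf (map_pmf snd (cond_pmf H A01)) (map_pmf snd (cond_pmf H A11))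
      = map_pmf (\<lambda>(a, b). (snd a, snd b)) (pair_pmf (cond_pmf H A01) (cond_pmf H A11))"
      by (simp add: map_pair)
    have g: "measure_pmf.prob (pair_pmf (cond_pmf H A01) (cond_pmf H A11)) S = measure_pmf.prob P ((A01 \<times> A11) \<inter> S) / (p01 * p11)" for S
      using pair_cond_prob[of H A01 H A11 S] that unfolding p01_def p11_def P_def by simp
    have v1: "(\<lambda>(a, b). (snd a, snd b)) -` {(a::nat, b). a > b} = {(a, b). snd a > snd b}" by auto
    have v2: "(\<lambda>(a, b). (snd a, snd b)) -` {(a::nat, b). a = b} = {(a, b). snd a = snd b}" by auto
    have eq1: "measure_pmf.prob P U1 = p01 * p11 - measure_pmf.prob P U2 - measure_pmf.prob P U3"
      using U123 by simp
    show ?thesis using that unfolding eq1 e measure_map_pmf v1 v2 g U2_def[symmetric] U3_def[symmetric]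
      by (simp add: field_simps)
  qed
  have Vcase: "p10 * (1 - 2 * measure_pmf.prob (pair_pmf (map_pmf fst (cond_pmf H A10)) (map_pmf fst (cond_pmf H A11))) {(a, b). a > b}
      - measure_pmf.prob (pair_pmf (map_pmf fst (cond_pmf H A10)) (map_pmf fst (cond_pmf H A11))) {(a, b). a = b}) * p11
      = measure_pmf.prob P V1 - measure_pmf.prob P V2" if "p10 \<noteq> 0" "p11 \<noteq> 0"
  proof -
    have e: "pair_pmf (map_pmf fst (cond_pmf H A10)) (map_pmf fst (cond_pmf H A11))
      = map_pmf (\<lambda>(a, b). (fst a, fst b)) (pair_pmf (cond_pmf H A10) (cond_pmf H A11))"
      by (simp add: map_pair)
    have g: "measure_pmf.prob (pair_pmf (cond_pmf H A10) (cond_pmf H A11)) S = measure_pmf.prob P ((A10 \<times> A11) \<inter> S) / (p10 * p11)" for S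
      using pair_cond_prob[of H A10 H A11 S] that unfolding p10_def p11_def P_def by simp
    have v1: "(\<lambda>(a, b). (fst a, fst b)) -` {(a::nat, b). a > b} = {(a, b). fst a > fst b}" by auto
    have v2: "(\<lambda>(a, b). (fst a, fst b)) -` {(a::nat, b). a = b} = {(a, b). fst a = fst b}" by auto
    have eq1: "measure_pmf.prob P V1 = p10 * p11 - measure_pmf.prob P V2 - measure_pmf.prob P V3"
      using V123 by simp
    show ?thesis using that unfolding eq1 e measure_map_pmf v1 v2 g V2_def[symmetric] V3_def[symmetric]
      by (simp add: field_simps)
  qed
  have U0: "measure_pmf.prob P U1 = 0 \<and> measure_pmf.prob P U2 = 0" if "p01 = 0 \<or> p11 = 0"
    using that mono0[of U1 A01 A11] mono0[of U2 A01 A11] unfolding p01_def p11_def U1_def U2_def by auto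
  have V0: "measure_pmf.prob P V1 = 0 \<and> measure_pmf.prob P V2 = 0" if "p10 = 0 \<or> p11 = 0"
    using that mono0[of V1 A10 A11] mono0[of V2 A10 A11] unfolding p10_def p11_def V1_def V2_def by auto
  have Wcase: "p11\<^sup>2 * kendall_tau (cond_pmf H A11) = measure_pmf.prob P W1 - measure_pmf.prob P W2" if "p11 \<noteq> 0"
  proof -
    have g: "measure_pmf.prob (pair_pmf (cond_pmf H A11) (cond_pmf H A11)) S = measure_pmf.prob P ((A11 \<times> A11) \<inter> S) / (p11 * p11)" for S
      using pair_cond_prob[of H A11 H A11 S] that unfolding p11_def P_def by simp
    have "kendall_tau (cond_pmf H A11) = measure_pmf.prob (pair_pmf (cond_pmf H A11) (cond_pmf H A11)) Pos
        - measure_pmf.prob (pair_pmf (cond_pmf H A11) (cond_pmf H A11)) Neg"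
      unfolding kendall_tau_def Pos_def Neg_def by simp
    then show ?thesis using that unfolding g W1_def[symmetric] W2_def[symmetric]
      by (simp add: field_simps power2_eq_square)
  qed
  have W0: "measure_pmf.prob P W1 = 0 \<and> measure_pmf.prob P W2 = 0" if "p11 = 0"
    using that mono0[of W1 A11 A11] mono0[of W2 A11 A11] unfolding p11_def W1_def W2_def by auto
  have main: "kendall_tau H = (if p11 = 0 then 0 else p11\<^sup>2 * kendall_tau (cond_pmf H A11))
         + 2 * (p00 * p11 - p01 * p10)
         + 2 * p11 * ((if p10 = 0 \<or> p11 = 0 then 0 else p10 * (1 - 2 * measure_pmf.prob (pair_pmf (map_pmf fst (cond_pmf H A10)) (map_pmf fst (cond_pmf H A11))) {(a, b). a > b}
      - measure_pmf.prob (pair_pmf (map_pmf fst (cond_pmf H A10)) (map_pmf fst (cond_pmf H A11))) {(a, b). a = b}))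
                    + (if p01 = 0 \<or> p11 = 0 then 0 else p01 * (1 - 2 * measure_pmf.prob (pair_pmf (map_pmf snd (cond_pmf H A01)) (map_pmf snd (cond_pmf H A11))) {(a, b). a > b}
      - measure_pmf.prob (pair_pmf (map_pmf snd (cond_pmf H A01)) (map_pmf snd (cond_pmf H A11))) {(a, b). a = b})))"
    unfolding F1 F2 F3 using Ucase Vcase U0 V0 Wcase W0
    by (auto simp: sw prod p00_def[symmetric] p01_def[symmetric] p10_def[symmetric] p11_def[symmetric] algebra_simps)
  show ?thesis unfolding Let_def using main unfolding A00_def A01_def A10_def A11_def p00_def p01_def p10_def p11_def .
qed

end
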